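(* Let $G$ be a metrizable abelian topological group in which every cyclic subgroup is discrete. The following are equivalent: (i) $G$ contains a subgroup topologically isomorphic to $S_A$ for some infinite subset $A$ of $G$; (ii) $G$ is not NSS.
   Context: For $a\in G$, $\langle a\rangle$ is the cyclic subgroup generated by $a$ with the subspace topology. $S_A=\bigoplus_{a\in A}\langle a\rangle$ is the subgroup of finitely supported elements of $\prod_{a\in A}\langle a\rangle$, with the subspace topology of the Tychonoff product topology. A topological group is NSS if it has a neighbourhood of the identity containing no non-trivial subgroup. *)

theory Defs
  imports "HOL-Analysis.Analysis"
begin

definition topological_ab_group :: "('a::ab_group_add) topology \<Rightarrow> bool" where
  "topological_ab_group T \<longleftrightarrow>
     topspace T = UNIV \<and>
     continuous_map (prod_topology T T) T (\<lambda>(x, y). x + y) \<and>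
     continuous_map T T uminus"

definition add_subgroup :: "('a::ab_group_add) set \<Rightarrow> bool" where
  "add_subgroup H \<longleftrightarrow> 0 \<in> H \<and> (\<forall>x\<in>H. \<forall>y\<in>H. x + y \<in> H) \<and> (\<forall>x\<in>H. - x \<in> H)"

definition cyclic :: "('a::ab_group_add) \<Rightarrow> 'a set" where
  "cyclic a = {(\<Sum>i<n. a) | n::nat. True} \<union> {- (\<Sum>i<n. a) | n::nat. True}"

definition NSS :: "('a::ab_group_add) topology \<Rightarrow> bool" where
  "NSS T \<longleftrightarrow> (\<exists>U. (\<exists>V. openin T V \<and> 0 \<in> V \<and> V \<subseteq> U) \<and>
                 (\<forall>H. add_subgroup H \<and> H \<subseteq> U \<longrightarrow> H = {0}))"

text \<open>S_A: finitely supported elements of the product of the cyclic subgroups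
  (elements are extensional functions on A), with the subspace topology of the
  Tychonoff product of the subspace topologies, and pointwise addition.\<close>
definition S_carrier :: "('a::ab_group_add) set \<Rightarrow> ('a \<Rightarrow> 'a) set" where
  "S_carrier A = {f \<in> PiE A cyclic. finite {a \<in> A. f a \<noteq> 0}}"

definition S_topology :: "('a::ab_group_add) topology \<Rightarrow> 'a set \<Rightarrow> ('a \<Rightarrow> 'a) topology" where
  "S_topology T A = subtopology (product_topology (\<lambda>a. subtopology T (cyclic a)) A) (S_carrier A)"

definition S_add :: "('a::ab_group_add) set \<Rightarrow> ('a \<Rightarrow> 'a) \<Rightarrow> ('a \<Rightarrow> 'a) \<Rightarrow> ('a \<Rightarrow> 'a)" where
  "S_add A f g = restrict (\<lambda>a. f a + g a) A"

text \<open>G contains a subgroup topologically isomorphic to S_A: an injective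
  homomorphism from S_A into G that is a homeomorphism onto its image
  (with the subspace topology); its image is then a subgroup of G.\<close>
definition contains_S :: "('a::ab_group_add) topology \<Rightarrow> 'a set \<Rightarrow> bool" where
  "contains_S T A \<longleftrightarrow> (\<exists>\<phi>.
      (\<forall>f\<in>S_carrier A. \<forall>g\<in>S_carrier A. \<phi> (S_add A f g) = \<phi> f + \<phi> g) \<and>
      inj_on \<phi> (S_carrier A) \<and>
      homeomorphic_map (S_topology T A) (subtopology T (\<phi> ` S_carrier A)) \<phi>)"

end

theory Submission
  imports Defs
begin


definition mlt :: "('a::ab_group_add) \<Rightarrow> nat \<Rightarrow> 'a" where "mlt x n = (\<Sum>i<n. x)"

lemma mlt_add: "mlt x (n + k) = mlt x n + mlt x k"
  by (induction k) (simp_all add: mlt_def add.assoc)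

lemma cyclic_iff: "y \<in> cyclic x \<longleftrightarrow> (\<exists>n. y = mlt x n \<or> y = - mlt x n)"
  unfolding cyclic_def mlt_def by auto

lemma mlt_sub: "mlt x n + - mlt x k \<in> cyclic x"
proof (cases "k \<le> n")
  case True
  then have "mlt x n = mlt x k + mlt x (n - k)" using mlt_add[of x k "n-k"] by simp
  then show ?thesis unfolding cyclic_iff by (intro exI[of _ "n-k"]) (simp add: algebra_simps)
next
  case False
  then have "mlt x k = mlt x n + mlt x (k - n)" using mlt_add[of x n "k-n"] by simp
  then show ?thesis unfolding cyclic_iff by (intro exI[of _ "k-n"]) (simp add: algebra_simps)
qed

lemma cyclic_add: "y \<in> cyclic x \<Longrightarrow> z \<in> cyclic x \<Longrightarrow> y + z \<in> cyclic x"
proof -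
  assume "y \<in> cyclic x" "z \<in> cyclic x"
  then obtain n k where y: "y = mlt x n \<or> y = - mlt x n" and z: "z = mlt x k \<or> z = - mlt x k"
    by (auto simp: cyclic_iff)
  show ?thesis
  proof (cases "y = mlt x n")
    case True
    show ?thesis
    proof (cases "z = mlt x k")
      case True
      then show ?thesis using \<open>y = mlt x n\<close> mlt_add[of x n k] unfolding cyclic_iff by (intro exI[of _ "n+k"]) simp
    next
      case False
      then show ?thesis using \<open>y = mlt x n\<close> z mlt_sub[of x n k] by auto
    qed
  next
    case False
    then have y': "y = - mlt x n" using y by auto
    show ?thesis
    proof (cases "z = mlt x k")
      case True
      then show ?thesis using y' mlt_sub[of x k n] by (simp add: add.commute)
    next
      case False
      then have "z = - mlt x k" using z by auto
      then show ?thesis using y' mlt_add[of x n k] unfolding cyclic_iff by (intro exI[of _ "n+k"]) (simp add: algebra_simps)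
    qed
  qed
qed

lemma cyclic_neg: "y \<in> cyclic x \<Longrightarrow> - y \<in> cyclic x"
  by (auto simp: cyclic_iff)

lemma cyclic_0: "0 \<in> cyclic x"
  unfolding cyclic_iff mlt_def by (rule exI[of _ 0]) simp

lemma cyclic_self: "x \<in> cyclic x"
  unfolding cyclic_iff mlt_def by (rule exI[of _ 1]) simp

lemma cyclic_diff: "y \<in> cyclic x \<Longrightarrow> z \<in> cyclic x \<Longrightarrow> y - z \<in> cyclic x"
  using cyclic_add cyclic_neg by (metis diff_conv_add_uminus)

lemma subgroup_cyclic: assumes "add_subgroup H" "x \<in> H" shows "cyclic x \<subseteq> H"
proof -
  have "mlt x n \<in> H" for n
    by (induction n) (use assms in \<open>auto simp: mlt_def add_subgroup_def\<close>)
  then show ?thesis using assms unfolding add_subgroup_def by (auto simp: cyclic_iff)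
qed

lemma tg_translate:
  assumes "topological_ab_group T" "openin T V"
  shows "openin T {x. c + x \<in> V}"
proof -
  have c: "continuous_map (prod_topology T T) T (\<lambda>(x, y). x + y)" and ts: "topspace T = UNIV"
    using assms by (auto simp: topological_ab_group_def)
  have "continuous_map T (prod_topology T T) (\<lambda>x. (c, x))"
    by (rule continuous_map_pairedI[OF _ continuous_map_id[unfolded id_def]]) (simp add: ts)
  from continuous_map_compose[OF this c] have "continuous_map T T (\<lambda>x. c + x)"
    by (simp add: o_def)
  from openin_continuous_map_preimage[OF this assms(2)] show ?thesis by (simp add: ts)
qed

lemma tg_half:
  assumes "topological_ab_group T" "openin T V" "0 \<in> V"
  shows "\<exists>U. openin T U \<and> 0 \<in> U \<and> (\<forall>x\<in>U. \<forall>y\<in>U. x + y \<in> V)"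
proof -
  have c: "continuous_map (prod_topology T T) T (\<lambda>(x, y). x + y)" and ts: "topspace T = UNIV"
    using assms by (auto simp: topological_ab_group_def)
  define P where "P = {p. (case p of (x, y) \<Rightarrow> x + y) \<in> V}"
  have "openin (prod_topology T T) P"
    using openin_continuous_map_preimage[OF c assms(2)] by (simp add: ts P_def)
  moreover have "(0, 0) \<in> P" using assms by (simp add: P_def)
  ultimately have "\<exists>U1 U2. openin T U1 \<and> openin T U2 \<and> 0 \<in> U1 \<and> 0 \<in> U2 \<and> U1 \<times> U2 \<subseteq> P"
    unfolding openin_prod_topology_alt by presburger
  then obtain U1 U2 where "openin T U1" "openin T U2" "0 \<in> U1" "0 \<in> U2"
    "U1 \<times> U2 \<subseteq> P" by blast
  moreover have "\<forall>x\<in>U1 \<inter> U2. \<forall>y\<in>U1 \<inter> U2. x + y \<in> V"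
  proof (intro ballI)
    fix x y assume "x \<in> U1 \<inter> U2" "y \<in> U1 \<inter> U2"
    then have "(x, y) \<in> P" using \<open>U1 \<times> U2 \<subseteq> P\<close> by blast
    then show "x + y \<in> V" by (simp add: P_def)
  qed
  ultimately show ?thesis by (intro exI[of _ "U1 \<inter> U2"]) auto
qed


locale seqS =
  fixes T :: "('a::ab_group_add) topology" and U :: "nat \<Rightarrow> 'a set" and a :: "nat \<Rightarrow> 'a"
  assumes tg: "topological_ab_group T"
  and disc: "\<And>x. subtopology T (cyclic x) = discrete_topology (cyclic x)"
  and U_open: "\<And>k. openin T (U k)" and U_0: "\<And>k. 0 \<in> U k"
  and a_ne: "\<And>k. a k \<noteq> 0" and a_cyc: "\<And>k. cyclic (a k) \<subseteq> U k"
  and U_dec: "\<And>k x y. x \<in> U (Suc k) \<Longrightarrow> y \<in> U (Suc k) \<Longrightarrow> x + y \<in> U k"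
  and U_sep: "\<And>k x y z. x \<in> U (Suc k) \<Longrightarrow> y \<in> U (Suc k) \<Longrightarrow> z \<in> U (Suc k) \<Longrightarrow>
                x + (y + z) \<in> cyclic (a k) \<Longrightarrow> x + (y + z) = 0"
  and U_small: "\<And>V. openin T V \<Longrightarrow> 0 \<in> V \<Longrightarrow> \<exists>k. U k \<subseteq> V"
begin

lemma ts: "topspace T = UNIV" using tg by (simp add: topological_ab_group_def)

lemma U_Suc: "U (Suc k) \<subseteq> U k"
proof
  fix x assume "x \<in> U (Suc k)"
  from U_dec[OF this U_0] show "x \<in> U k" by simp
qed

lemma U_mono: "k \<le> m \<Longrightarrow> U m \<subseteq> U k"
  by (rule lift_Suc_antimono_le[of U, OF U_Suc])

lemma tail_aux:
  "\<forall>n J. J \<subseteq> {n..<n+d} \<longrightarrow> (\<forall>j\<in>J. x j \<in> U j) \<longrightarrow> (\<exists>p q. p \<in> U n \<and> q \<in> U n \<and> sum x J = p + q)"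
proof (induction d)
  case 0
  then show ?case using U_0 by (auto intro!: exI[of _ 0])
next
  case (Suc d)
  show ?case
  proof (intro allI impI)
    fix n J assume J: "J \<subseteq> {n..<n + Suc d}" and xJ: "\<forall>j\<in>J. x j \<in> U j"
    have fin: "finite J" using J finite_subset by blast
    have J': "J - {n} \<subseteq> {Suc n..<Suc n + d}" using J by auto
    obtain p q where pq: "p \<in> U (Suc n)" "q \<in> U (Suc n)" "sum x (J - {n}) = p + q"
      using Suc.IH J' xJ by (meson DiffD1)
    have pqn: "p + q \<in> U n" using U_dec[OF pq(1,2)] .
    show "\<exists>p q. p \<in> U n \<and> q \<in> U n \<and> sum x J = p + q"
    proof (cases "n \<in> J")
      case True
      then have "sum x J = x n + sum x (J - {n})" using fin by (simp add: sum.remove)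
      then show ?thesis using pqn pq(3) xJ True by (intro exI[of _ "x n"] exI[of _ "p + q"]) auto
    next
      case False
      then have "sum x J = sum x (J - {n})" by simp
      then show ?thesis using pqn pq(3) U_0 by (intro exI[of _ "p + q"] exI[of _ 0]) auto
    qed
  qed
qed

lemma tail:
  assumes "finite J" "J \<subseteq> {n..}" "\<And>j. j \<in> J \<Longrightarrow> x j \<in> U j"
  shows "\<exists>p q. p \<in> U n \<and> q \<in> U n \<and> sum x J = p + q"
proof -
  obtain d where d: "J \<subseteq> {..<d}" using finite_nat_bounded[OF assms(1)] by blast
  have "J \<subseteq> {n..<n+d}" using d assms(2) by (force simp: subset_eq)
  then show ?thesis using tail_aux[of d x] assms(3) by blast
qed

lemma a_inj: "inj a"
proof -
  have *: False if "j < k" "a j = a k" for j k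
  proof -
    have "a k \<in> U k" using a_cyc cyclic_self by blast
    then have ak: "a k \<in> U (Suc j)" using U_mono[of "Suc j" k] that(1) by auto
    have "a k + (0 + 0) \<in> cyclic (a j)" using that(2) cyclic_self by simp
    from U_sep[OF ak U_0 U_0 this] have "a k = 0" by simp
    then show False using a_ne by simp
  qed
  show ?thesis
    unfolding inj_def using * by (metis linorder_neqE_nat)
qed

abbreviation "S \<equiv> S_carrier (range a)"

definition phi :: "('a \<Rightarrow> 'a) \<Rightarrow> 'a" where "phi f = (\<Sum>i\<in>{i. f (a i) \<noteq> 0}. f (a i))"

lemma supp_fin: "f \<in> S \<Longrightarrow> finite {i. f (a i) \<noteq> 0}"
proof -
  assume "f \<in> S"
  then have "finite {b \<in> range a. f b \<noteq> 0}" by (simp add: S_carrier_def)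
  then have "finite (a -` {b \<in> range a. f b \<noteq> 0})" by (rule finite_vimageI) (rule a_inj)
  moreover have "a -` {b \<in> range a. f b \<noteq> 0} = {i. f (a i) \<noteq> 0}" by auto
  ultimately show ?thesis by simp
qed

lemma phi_eq: "finite I \<Longrightarrow> {i. f (a i) \<noteq> 0} \<subseteq> I \<Longrightarrow> phi f = (\<Sum>i\<in>I. f (a i))"
  unfolding phi_def by (rule sum.mono_neutral_left) auto

lemma S_mem: "f \<in> S \<Longrightarrow> f (a i) \<in> cyclic (a i)"
  by (auto simp: S_carrier_def PiE_iff)

lemma S_ext: "f \<in> S \<Longrightarrow> g \<in> S \<Longrightarrow> (\<And>i. f (a i) = g (a i)) \<Longrightarrow> f = g"
  unfolding S_carrier_def by (rule PiE_ext[of f "range a" cyclic]) auto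

lemma phi_diff:
  assumes "f \<in> S" "g \<in> S" "finite I" "{i. f (a i) \<noteq> 0} \<subseteq> I" "{i. g (a i) \<noteq> 0} \<subseteq> I"
  shows "phi f - phi g = (\<Sum>i\<in>I. f (a i) - g (a i))"
  using phi_eq[OF assms(3,4)] phi_eq[OF assms(3,5)] by (simp add: sum_subtractf)

lemma near:
  assumes "f \<in> S" "g \<in> S" "\<And>i. i < k \<Longrightarrow> f (a i) = g (a i)"
  shows "\<exists>p q. p \<in> U k \<and> q \<in> U k \<and> phi f - phi g = p + q"
proof -
  define I where "I = {i. f (a i) \<noteq> 0} \<union> {i. g (a i) \<noteq> 0}"
  have fI: "finite I" using supp_fin assms(1,2) by (simp add: I_def)
  have "phi f - phi g = (\<Sum>i\<in>I. f (a i) - g (a i))"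
    by (rule phi_diff[OF assms(1,2) fI]) (auto simp: I_def)
  also have "\<dots> = (\<Sum>i\<in>{i\<in>I. k \<le> i}. f (a i) - g (a i))"
    by (rule sum.mono_neutral_right[OF fI]) (auto, metis assms(3) not_le)
  finally have eq: "phi f - phi g = (\<Sum>i\<in>{i\<in>I. k \<le> i}. f (a i) - g (a i))" .
  have "\<exists>p q. p \<in> U k \<and> q \<in> U k \<and> (\<Sum>i\<in>{i\<in>I. k \<le> i}. f (a i) - g (a i)) = p + q"
    by (rule tail) (auto intro!: subsetD[OF a_cyc] cyclic_diff S_mem[OF assms(1)] S_mem[OF assms(2)] simp: fI)
  then show ?thesis using eq by simp
qed

lemma key:
  assumes f: "f \<in> S" and g: "g \<in> S" and ne: "f (a j) \<noteq> g (a j)"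
    and eq: "\<And>i. i < j \<Longrightarrow> f (a i) = g (a i)"
  shows "phi f - phi g \<notin> U (Suc j)"
proof
  assume D: "phi f - phi g \<in> U (Suc j)"
  define I where "I = {i. f (a i) \<noteq> 0} \<union> {i. g (a i) \<noteq> 0} \<union> {j}"
  define d where "d i = f (a i) - g (a i)" for i
  have fI: "finite I" using supp_fin f g by (simp add: I_def)
  have jI: "j \<in> I" by (simp add: I_def)
  define J where "J = {i\<in>I. j < i}"
  have fJ: "finite J" using fI by (simp add: J_def)
  have "phi f - phi g = sum d I"
    unfolding d_def by (rule phi_diff[OF f g fI]) (auto simp: I_def)
  also have "\<dots> = d j + sum d (I - {j})" using fI jI by (simp add: sum.remove)
  also have "sum d (I - {j}) = sum d J"
    by (rule sum.mono_neutral_right) (use fI in \<open>auto simp: J_def d_def\<close>, metis eq linorder_neqE_nat)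
  finally have Deq: "phi f - phi g = d j + sum d J" .
  obtain p q where pq: "p \<in> U (Suc j)" "q \<in> U (Suc j)" "sum (\<lambda>i. - d i) J = p + q"
    using tail[OF fJ, of "Suc j" "\<lambda>i. - d i"] a_cyc cyclic_neg cyclic_diff S_mem f g
    unfolding J_def d_def by fastforce
  have "sum (\<lambda>i. - d i) J = - sum d J" by (simp add: sum_negf)
  then have "d j = (phi f - phi g) + (p + q)" using Deq pq(3) by (simp add: algebra_simps)
  moreover have "d j \<in> cyclic (a j)" unfolding d_def using S_mem f g cyclic_diff by blast
  ultimately have "d j = 0" using U_sep[OF D pq(1,2)] by simp
  then show False using ne by (simp add: d_def)
qed

lemma least_diff:
  assumes "f \<in> S" "g \<in> S" "\<exists>i. f (a i) \<noteq> g (a i)"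
  shows "\<exists>j. f (a j) \<noteq> g (a j) \<and> (\<forall>i<j. f (a i) = g (a i))"
  using assms(3) exists_least_iff[of "\<lambda>i. f (a i) \<noteq> g (a i)"] by blast

lemma phi_inj: "inj_on phi S"
proof (rule inj_onI)
  fix f g assume f: "f \<in> S" and g: "g \<in> S" and e: "phi f = phi g"
  show "f = g"
  proof (rule ccontr)
    assume "f \<noteq> g"
    then have "\<exists>i. f (a i) \<noteq> g (a i)" using S_ext f g by blast
    then obtain j where "f (a j) \<noteq> g (a j)" "\<forall>i<j. f (a i) = g (a i)"
      using least_diff f g by blast
    from key[OF f g this(1)] this(2) have "phi f - phi g \<notin> U (Suc j)" by blast
    then show False using e U_0 by simp
  qed
qed

lemma S_add_mem: assumes f: "f \<in> S" and g: "g \<in> S" shows "S_add (range a) f g \<in> S"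
proof -
  have "{b \<in> range a. S_add (range a) f g b \<noteq> 0} \<subseteq> {b \<in> range a. f b \<noteq> 0} \<union> {b \<in> range a. g b \<noteq> 0}"
    by (auto simp: S_add_def)
  moreover have "finite ({b \<in> range a. f b \<noteq> 0} \<union> {b \<in> range a. g b \<noteq> 0})"
    using f g by (simp add: S_carrier_def)
  ultimately have "finite {b \<in> range a. S_add (range a) f g b \<noteq> 0}" by (rule finite_subset)
  moreover have "S_add (range a) f g \<in> PiE (range a) cyclic"
    using f g by (auto simp: S_add_def S_carrier_def PiE_iff intro: cyclic_add)
  ultimately show ?thesis by (simp add: S_carrier_def)
qed

lemma phi_hom: assumes f: "f \<in> S" and g: "g \<in> S"
  shows "phi (S_add (range a) f g) = phi f + phi g"
proof -
  define I where "I = {i. f (a i) \<noteq> 0} \<union> {i. g (a i) \<noteq> 0}"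
  have fI: "finite I" using supp_fin f g by (simp add: I_def)
  have "phi (S_add (range a) f g) = (\<Sum>i\<in>I. S_add (range a) f g (a i))"
    by (rule phi_eq[OF fI]) (auto simp: I_def S_add_def)
  also have "\<dots> = (\<Sum>i\<in>I. f (a i) + g (a i))" by (simp add: S_add_def)
  also have "\<dots> = phi f + phi g"
    using phi_eq[OF fI, of f] phi_eq[OF fI, of g] by (simp add: sum.distrib I_def)
  finally show ?thesis .
qed

abbreviation "P \<equiv> product_topology (\<lambda>b. subtopology T (cyclic b)) (range a)"

lemma topP: "topspace P = PiE (range a) cyclic"
  by (simp add: ts)

lemma S_sub: "S \<subseteq> topspace P"
  by (auto simp: topP S_carrier_def ts)

lemma top_S: "topspace (S_topology T (range a)) = S"
  using S_sub by (auto simp: S_topology_def)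

definition Box where "Box f0 k = {g \<in> S. \<forall>i<k. g (a i) = f0 (a i)}"

lemma box_open:
  assumes f0: "f0 \<in> S" shows "openin (S_topology T (range a)) (Box f0 k)"
proof -
  have "openin P {g \<in> topspace P. \<forall>i<k. g (a i) = f0 (a i)}"
  proof (induction k)
    case 0
    then show ?case using openin_topspace[of P] by simp
  next
    case (Suc k)
    have "openin (subtopology T (cyclic (a k))) {f0 (a k)}"
      using S_mem[OF f0, of k] by (simp add: disc)
    from openin_continuous_map_preimage[OF continuous_map_product_projection[where k="a k" and I="range a" and X="\<lambda>b. subtopology T (cyclic b)", OF rangeI] this]
    have "openin P {g \<in> topspace P. g (a k) \<in> {f0 (a k)}}" by simp
    from openin_Int[OF Suc.IH this]
    show ?case by (rule back_subst) (auto simp: less_Suc_eq)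
  qed
  moreover have "Box f0 k = {g \<in> topspace P. \<forall>i<k. g (a i) = f0 (a i)} \<inter> S"
    using S_sub by (auto simp: Box_def)
  ultimately show ?thesis unfolding S_topology_def openin_subtopology by blast
qed

lemma box_in:
  assumes N: "openin (S_topology T (range a)) N" and f0: "f0 \<in> N"
  shows "\<exists>k. Box f0 k \<subseteq> N"
proof -
  obtain Op where Op: "openin P Op" "N = Op \<inter> S"
    using N unfolding S_topology_def openin_subtopology by blast
  have "f0 \<in> Op" using Op f0 by blast
  then obtain W where W: "finite {b \<in> range a. W b \<noteq> topspace (subtopology T (cyclic b))}"
    "f0 \<in> PiE (range a) W" "PiE (range a) W \<subseteq> Op"
    using Op(1) unfolding openin_product_topology_alt by blast
  define F where "F = {b \<in> range a. W b \<noteq> cyclic b}"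
  have fF: "finite F" using W(1) by (simp add: F_def ts)
  have "finite (a -` F)" by (rule finite_vimageI[OF fF a_inj])
  then obtain k where k: "a -` F \<subseteq> {..<k}" using finite_nat_bounded by blast
  have "Box f0 k \<subseteq> N"
  proof
    fix g assume g: "g \<in> Box f0 k"
    then have gS: "g \<in> S" by (simp add: Box_def)
    have "g \<in> PiE (range a) W"
    proof (subst PiE_iff, intro conjI ballI)
      fix b assume "b \<in> range a"
      then obtain i where b: "b = a i" by blast
      show "g b \<in> W b"
      proof (cases "b \<in> F")
        case True
        then have "i < k" using k b by auto
        then have "g b = f0 b" using g b by (simp add: Box_def)
        then show ?thesis using W(2) \<open>b \<in> range a\<close> by (auto simp: PiE_iff)
      next
        case False
        then have "W b = cyclic b" using \<open>b \<in> range a\<close> by (simp add: F_def)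
        then show ?thesis using S_mem[OF gS, of i] b by simp
      qed
    next
      show "g \<in> extensional (range a)" using gS by (auto simp: S_carrier_def PiE_iff)
    qed
    then show "g \<in> N" using W(3) Op(2) gS by blast
  qed
  then show ?thesis by blast
qed

lemma phi_cont: "continuous_map (S_topology T (range a)) (subtopology T (phi ` S)) phi"
proof -
  have "continuous_map (S_topology T (range a)) T phi"
    unfolding continuous_map_def
  proof (intro conjI allI impI)
    show "phi \<in> topspace (S_topology T (range a)) \<rightarrow> topspace T" by (simp add: ts)
  next
    fix V assume V: "openin T V"
    show "openin (S_topology T (range a)) {x \<in> topspace (S_topology T (range a)). phi x \<in> V}"
    proof (subst openin_subopen, intro ballI)
      fix f0 assume "f0 \<in> {x \<in> topspace (S_topology T (range a)). phi x \<in> V}"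
      then have f0: "f0 \<in> S" "phi f0 \<in> V" by (auto simp: top_S)
      define V0 where "V0 = {x. phi f0 + x \<in> V}"
      have "openin T V0" unfolding V0_def by (rule tg_translate[OF tg V])
      moreover have "0 \<in> V0" using f0 by (simp add: V0_def)
      ultimately obtain k where k: "U k \<subseteq> V0" using U_small by blast
      have "Box f0 (Suc k) \<subseteq> {x \<in> topspace (S_topology T (range a)). phi x \<in> V}"
      proof
        fix g assume g: "g \<in> Box f0 (Suc k)"
        then have gS: "g \<in> S" by (simp add: Box_def)
        obtain p q where "p \<in> U (Suc k)" "q \<in> U (Suc k)" "phi g - phi f0 = p + q"
          using near[OF gS f0(1), of "Suc k"] g by (auto simp: Box_def)
        then have "phi g - phi f0 \<in> V0" using U_dec k by auto
        then have "phi g \<in> V" by (simp add: V0_def)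
        then show "g \<in> {x \<in> topspace (S_topology T (range a)). phi x \<in> V}"
          using gS by (simp add: top_S)
      qed
      moreover have "f0 \<in> Box f0 (Suc k)" using f0 by (simp add: Box_def)
      ultimately show "\<exists>T'. openin (S_topology T (range a)) T' \<and> f0 \<in> T' \<and>
           T' \<subseteq> {x \<in> topspace (S_topology T (range a)). phi x \<in> V}"
        using box_open[OF f0(1)] by blast
    qed
  qed
  then show ?thesis by (simp add: continuous_map_in_subtopology top_S)
qed

lemma phi_open: "open_map (S_topology T (range a)) (subtopology T (phi ` S)) phi"
  unfolding open_map_def
proof (intro allI impI)
  fix N assume N: "openin (S_topology T (range a)) N"
  have NS: "N \<subseteq> S" using openin_subset[OF N] by (simp add: top_S)
  show "openin (subtopology T (phi ` S)) (phi ` N)"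
  proof (subst openin_subopen, intro ballI)
    fix y assume "y \<in> phi ` N"
    then obtain f0 where f0: "f0 \<in> N" "y = phi f0" by blast
    have f0S: "f0 \<in> S" using f0 NS by blast
    obtain k where k: "Box f0 k \<subseteq> N" using box_in[OF N f0(1)] by blast
    define V where "V = {x. (- phi f0) + x \<in> U k}"
    have Vo: "openin T V" unfolding V_def by (rule tg_translate[OF tg U_open])
    have "V \<inter> phi ` S \<subseteq> phi ` N"
    proof
      fix z assume "z \<in> V \<inter> phi ` S"
      then obtain g where g: "g \<in> S" "z = phi g" "- phi f0 + phi g \<in> U k" by (auto simp: V_def)
      have "\<forall>i<k. g (a i) = f0 (a i)"
      proof (rule ccontr)
        assume "\<not> (\<forall>i<k. g (a i) = f0 (a i))"
        then obtain i where "i < k" "g (a i) \<noteq> f0 (a i)" by blast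
        then obtain j where j: "g (a j) \<noteq> f0 (a j)" "\<forall>i<j. g (a i) = f0 (a i)"
          using least_diff[OF g(1) f0S] by blast
        have "j < k" using j(2) \<open>i < k\<close> \<open>g (a i) \<noteq> f0 (a i)\<close> by (meson not_less order_le_less_trans)
        have "phi g - phi f0 \<notin> U (Suc j)" using key[OF g(1) f0S j(1)] j(2) by blast
        moreover have "U k \<subseteq> U (Suc j)" using U_mono \<open>j < k\<close> by simp
        ultimately show False using g(3) by (auto simp: algebra_simps)
      qed
      then have "g \<in> Box f0 k" using g by (simp add: Box_def)
      then show "z \<in> phi ` N" using k g by blast
    qed
    moreover have "y \<in> V \<inter> phi ` S" using f0 f0S U_0 by (simp add: V_def)
    moreover have "openin (subtopology T (phi ` S)) (V \<inter> phi ` S)"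
      using Vo by (auto simp: openin_subtopology)
    ultimately show "\<exists>T'. openin (subtopology T (phi ` S)) T' \<and> y \<in> T' \<and> T' \<subseteq> phi ` N"
      by blast
  qed
qed

lemma result: "infinite (range a) \<and> contains_S T (range a)"
proof
  show "infinite (range a)" using range_inj_infinite[OF a_inj] .
  have "homeomorphic_map (S_topology T (range a)) (subtopology T (phi ` S)) phi"
    by (rule bijective_open_imp_homeomorphic_map[OF phi_cont phi_open]) (auto simp: top_S ts phi_inj)
  then show "contains_S T (range a)"
    unfolding contains_S_def using phi_hom phi_inj by blast
qed

end


lemma S_add_mem_gen: assumes f: "f \<in> S_carrier A" and g: "g \<in> S_carrier A" shows "S_add A f g \<in> S_carrier A"
proof -
  have "{b \<in> A. S_add A f g b \<noteq> 0} \<subseteq> {b \<in> A. f b \<noteq> 0} \<union> {b \<in> A. g b \<noteq> 0}"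
    by (auto simp: S_add_def)
  moreover have "finite ({b \<in> A. f b \<noteq> 0} \<union> {b \<in> A. g b \<noteq> 0})"
    using f g by (simp add: S_carrier_def)
  ultimately have "finite {b \<in> A. S_add A f g b \<noteq> 0}" by (rule finite_subset)
  moreover have "S_add A f g \<in> PiE A cyclic"
    using f g by (auto simp: S_add_def S_carrier_def PiE_iff intro: cyclic_add)
  ultimately show ?thesis by (simp add: S_carrier_def)
qed

lemma dir1:
  fixes T :: "('a::ab_group_add) topology"
  assumes tg: "topological_ab_group T" and inf: "infinite A" and cS: "contains_S T A"
  shows "\<not> NSS T"
proof -
  have ts: "topspace T = UNIV" using tg by (simp add: topological_ab_group_def)
  let ?S = "S_carrier A"
  let ?P = "product_topology (\<lambda>b. subtopology T (cyclic b)) A"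
  obtain \<phi> where hom: "\<And>f g. f \<in> ?S \<Longrightarrow> g \<in> ?S \<Longrightarrow> \<phi> (S_add A f g) = \<phi> f + \<phi> g"
    and inj: "inj_on \<phi> ?S" and hm: "homeomorphic_map (S_topology T A) (subtopology T (\<phi> ` ?S)) \<phi>"
    using cS unfolding contains_S_def by blast
  have topS: "topspace (S_topology T A) = ?S"
    by (auto simp: S_topology_def S_carrier_def ts)
  have cont: "continuous_map (S_topology T A) T \<phi>"
    using homeomorphic_imp_continuous_map[OF hm] by (simp add: continuous_map_in_subtopology)
  define z where "z = restrict (\<lambda>_. 0::'a) A"
  have zS: "z \<in> ?S" by (simp add: z_def S_carrier_def cyclic_0)
  have "S_add A z z = z" by (rule ext) (simp add: S_add_def z_def)
  then have phiz: "\<phi> z = 0" using hom[OF zS zS] by simp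
  define neg where "neg f = restrict (\<lambda>b. - f b) A" for f :: "'a \<Rightarrow> 'a"
  have negS: "neg f \<in> ?S" if "f \<in> ?S" for f
  proof -
    have "{b \<in> A. neg f b \<noteq> 0} = {b \<in> A. f b \<noteq> 0}" by (auto simp: neg_def)
    moreover have "neg f \<in> PiE A cyclic" using that by (auto simp: neg_def S_carrier_def PiE_iff intro: cyclic_neg)
    ultimately show ?thesis using that by (simp add: S_carrier_def)
  qed
  have negz: "S_add A (neg f) f = z" for f by (auto simp: S_add_def neg_def z_def)
  have phineg: "\<phi> (neg f) = - \<phi> f" if "f \<in> ?S" for f
    using hom[OF negS[OF that] that] negz[of f] phiz by (simp add: eq_neg_iff_add_eq_0)
  show ?thesis
    unfolding NSS_def
  proof (clarify)
    fix U V assume V: "openin T V" "0 \<in> V" "V \<subseteq> U"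
      and nss: "\<forall>H. add_subgroup H \<and> H \<subseteq> U \<longrightarrow> H = {0}"
    have "openin (S_topology T A) {f \<in> topspace (S_topology T A). \<phi> f \<in> V}"
      by (rule openin_continuous_map_preimage[OF cont V(1)])
    then have "openin (S_topology T A) {f \<in> ?S. \<phi> f \<in> V}" by (simp only: topS)
    then have "\<exists>Op. openin ?P Op \<and> {f \<in> ?S. \<phi> f \<in> V} = Op \<inter> ?S"
      unfolding S_topology_def openin_subtopology .
    then obtain Op where Op: "openin ?P Op" "{f \<in> ?S. \<phi> f \<in> V} = Op \<inter> ?S"
      by blast
    have "z \<in> {f \<in> ?S. \<phi> f \<in> V}" using zS phiz V(2) by simp
    then have "z \<in> Op \<inter> ?S" unfolding Op(2) .
    then have "z \<in> Op" by (rule IntD1)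
    then obtain W where W: "finite {b \<in> A. W b \<noteq> topspace (subtopology T (cyclic b))}"
      "z \<in> PiE A W" "PiE A W \<subseteq> Op"
      using Op(1) unfolding openin_product_topology_alt by blast
    define F where "F = {b \<in> A. W b \<noteq> cyclic b}"
    have fF: "finite F" using W(1) by (simp add: F_def ts)
    define K where "K = {f \<in> ?S. \<forall>b\<in>F. f b = 0}"
    have KV: "\<phi> f \<in> V" if "f \<in> K" for f
    proof -
      have fS: "f \<in> ?S" using that by (simp add: K_def)
      have "f \<in> PiE A W"
      proof (subst PiE_iff, intro conjI ballI)
        fix b assume b: "b \<in> A"
        show "f b \<in> W b"
        proof (cases "b \<in> F")
          case True
          then have "f b = z b" using that b by (simp add: K_def z_def)
          then show ?thesis using W(2) b by (auto simp: PiE_iff)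
        next
          case False
          then have "W b = cyclic b" using b by (simp add: F_def)
          then show ?thesis using fS b by (auto simp: S_carrier_def PiE_iff)
        qed
      next
        show "f \<in> extensional A" using fS by (auto simp: S_carrier_def PiE_iff)
      qed
      then have "f \<in> Op \<inter> ?S" using W(3) fS by blast
      then show ?thesis using Op(2) by blast
    qed
    have zK: "z \<in> K" using zS by (auto simp: K_def z_def F_def)
    have sg: "add_subgroup (\<phi> ` K)"
      unfolding add_subgroup_def
    proof (intro conjI ballI)
      show "0 \<in> \<phi> ` K" using zK phiz by (metis image_eqI)
    next
      fix x y assume "x \<in> \<phi> ` K" "y \<in> \<phi> ` K"
      then obtain f g where "f \<in> K" "g \<in> K" "x = \<phi> f" "y = \<phi> g" by blast
      moreover have sK: "S_add A f g \<in> K"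
      proof -
        have "f \<in> ?S" "g \<in> ?S" using \<open>f \<in> K\<close> \<open>g \<in> K\<close> by (simp_all add: K_def)
        then have "S_add A f g \<in> ?S" by (rule S_add_mem_gen)
        moreover have "\<forall>b\<in>F. S_add A f g b = 0"
          using \<open>f \<in> K\<close> \<open>g \<in> K\<close> by (simp add: K_def S_add_def F_def)
        ultimately show ?thesis by (simp add: K_def)
      qed
      moreover have "\<phi> (S_add A f g) = \<phi> f + \<phi> g" using hom \<open>f \<in> K\<close> \<open>g \<in> K\<close> by (simp add: K_def)
      ultimately show "x + y \<in> \<phi> ` K" by (metis image_eqI)
    next
      fix x assume "x \<in> \<phi> ` K"
      then obtain f where f: "f \<in> K" "x = \<phi> f" by blast
      then have "neg f \<in> K" using negS[of f] by (simp add: K_def neg_def F_def)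
      moreover have "\<phi> (neg f) = - x" using phineg f by (simp add: K_def)
      ultimately show "- x \<in> \<phi> ` K" by (metis image_eqI)
    qed
    have HU: "\<phi> ` K \<subseteq> U" using KV V(3) by blast
    have "infinite (A - F - {0})" using inf fF by simp
    then have "A - F - {0} \<noteq> {}" by (metis finite.emptyI)
    then obtain b where b: "b \<in> A" "b \<notin> F" "b \<noteq> 0" by blast
    define e where "e = restrict (\<lambda>c. if c = b then b else 0) A"
    have eS: "e \<in> ?S"
    proof -
      have "{c \<in> A. e c \<noteq> 0} \<subseteq> {b}" by (auto simp: e_def)
      then have "finite {c \<in> A. e c \<noteq> 0}" using finite_subset by blast
      moreover have "e \<in> PiE A cyclic" by (auto simp: e_def cyclic_self cyclic_0)
      ultimately show ?thesis by (simp add: S_carrier_def)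
    qed
    have eK: "e \<in> K" using eS b by (auto simp: K_def e_def F_def)
    have "e \<noteq> z" using b by (metis (mono_tags, lifting) e_def restrict_apply' z_def)
    then have "\<phi> e \<noteq> 0" using inj eS zS phiz by (metis inj_onD)
    then have "\<phi> ` K \<noteq> {0}" using eK by blast
    then show False using nss sg HU by blast
  qed
qed


primrec useq :: "(nat \<Rightarrow> 'a set \<Rightarrow> 'a \<times> 'a set) \<Rightarrow> nat \<Rightarrow> 'a set" where
  "useq nx 0 = UNIV" | "useq nx (Suc k) = snd (nx k (useq nx k))"

lemma dir2:
  fixes T :: "('a::ab_group_add) topology"
  assumes tg: "topological_ab_group T" and mt: "metrizable_space T"
    and disc: "\<And>x. subtopology T (cyclic x) = discrete_topology (cyclic x)"
    and nn: "\<not> NSS T"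
  shows "\<exists>A. infinite A \<and> contains_S T A"
proof -
  have ts: "topspace T = UNIV" using tg by (simp add: topological_ab_group_def)
  have "\<exists>\<B>. countable \<B> \<and> (\<forall>V\<in>\<B>. openin T V) \<and>
    (\<forall>U. openin T U \<and> 0 \<in> U \<longrightarrow> (\<exists>V\<in>\<B>. 0 \<in> V \<and> V \<subseteq> U))"
    using bspec[OF metrizable_imp_first_countable[OF mt, unfolded first_countable_def], of 0]
    by (simp add: ts)
  then obtain \<B> where \<B>: "countable \<B>" "\<forall>V\<in>\<B>. openin T V"
    "\<forall>U. openin T U \<and> 0 \<in> U \<longrightarrow> (\<exists>V\<in>\<B>. 0 \<in> V \<and> V \<subseteq> U)"
    by blast
  define \<B>0 where "\<B>0 = {V\<in>\<B>. 0 \<in> V}"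
  obtain V0 where V0: "V0 \<in> \<B>" "0 \<in> V0"
    using \<B>(3)[rule_format, of UNIV] openin_topspace[of T] ts by auto
  have ne: "\<B>0 \<noteq> {}" using V0 unfolding \<B>0_def by blast
  have c0: "countable \<B>0" unfolding \<B>0_def by (rule countable_subset[OF _ \<B>(1)]) blast
  define B where "B = from_nat_into \<B>0"
  have Bin: "B n \<in> \<B>0" for n unfolding B_def by (rule from_nat_into[OF ne])
  have Bo: "openin T (B n)" "0 \<in> B n" for n
    using Bin[of n] \<B>(2) unfolding \<B>0_def by auto
  have Bs: "\<exists>n. B n \<subseteq> V" if VV: "openin T V" "0 \<in> V" for V
  proof -
    obtain W where W: "W \<in> \<B>" "0 \<in> W" "W \<subseteq> V" using \<B>(3) VV by blast
    then have "W \<in> \<B>0" unfolding \<B>0_def by blast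
    then have "W \<in> range B" using range_from_nat_into[OF ne c0] unfolding B_def by simp
    then show ?thesis using W(3) by blast
  qed
  define R where "R n W x W' \<longleftrightarrow> x \<noteq> 0 \<and> cyclic x \<subseteq> W \<and> openin T W' \<and> 0 \<in> W' \<and>
     (\<forall>p\<in>W'. \<forall>q\<in>W'. p + q \<in> W) \<and> W' \<subseteq> B n \<and>
     (\<forall>p\<in>W'. \<forall>q\<in>W'. \<forall>r\<in>W'. p + (q + r) \<in> cyclic x \<longrightarrow> p + (q + r) = 0)" for n W x W'
  have step: "\<exists>x W'. R n W x W'" if W: "openin T W" "0 \<in> W" for n W
  proof -
    have "\<not> (\<forall>H. add_subgroup H \<and> H \<subseteq> W \<longrightarrow> H = {0})"
    proof
      assume a: "\<forall>H. add_subgroup H \<and> H \<subseteq> W \<longrightarrow> H = {0}"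
      have "\<exists>U. (\<exists>V. openin T V \<and> 0 \<in> V \<and> V \<subseteq> U) \<and> (\<forall>H. add_subgroup H \<and> H \<subseteq> U \<longrightarrow> H = {0})"
        using W a by (intro exI[of _ W] conjI exI[of _ W]) auto
      from nn[unfolded NSS_def] this show False by (rule notE)
    qed
    then obtain H where H: "add_subgroup H" "H \<subseteq> W" "H \<noteq> {0}" by blast
    have "0 \<in> H" using H(1) by (simp add: add_subgroup_def)
    then obtain h where h: "h \<in> H" "h \<noteq> 0" using H(3) by blast
    have ch: "cyclic h \<subseteq> W" using subgroup_cyclic[OF H(1) h(1)] H(2) by blast
    have "openin (subtopology T (cyclic h)) {0}" by (simp add: disc cyclic_0)
    then have "\<exists>Z. openin T Z \<and> {0} = Z \<inter> cyclic h" unfolding openin_subtopology .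
    then obtain Z where Z: "openin T Z" "{0} = Z \<inter> cyclic h" by blast
    define Y where "Y = W \<inter> Z \<inter> B n"
    have Yo: "openin T Y" "0 \<in> Y" using Z W Bo by (auto simp: Y_def)
    obtain Y1 where Y1: "openin T Y1" "0 \<in> Y1" "\<forall>x\<in>Y1. \<forall>y\<in>Y1. x + y \<in> Y"
      using tg_half[OF tg Yo] by blast
    obtain Y2 where Y2: "openin T Y2" "0 \<in> Y2" "\<forall>x\<in>Y2. \<forall>y\<in>Y2. x + y \<in> Y1"
      using tg_half[OF tg Y1(1,2)] by blast
    have Y1Y: "Y1 \<subseteq> Y" using Y1(2,3) by (metis add.right_neutral subsetI)
    have Y2Y1: "Y2 \<subseteq> Y1" using Y2(2,3) by (metis add.right_neutral subsetI)
    have "R n W h Y2"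
      unfolding R_def
    proof (intro conjI ballI impI)
      show "h \<noteq> 0" "cyclic h \<subseteq> W" "openin T Y2" "0 \<in> Y2" using h ch Y2 by auto
    next
      fix p q assume "p \<in> Y2" "q \<in> Y2"
      then show "p + q \<in> W" using Y2(3) Y1Y by (auto simp: Y_def)
    next
      show "Y2 \<subseteq> B n" using Y2Y1 Y1Y by (auto simp: Y_def)
    next
      fix p q r assume pqr: "p \<in> Y2" "q \<in> Y2" "r \<in> Y2" "p + (q + r) \<in> cyclic h"
      have "q + r \<in> Y1" using Y2(3) pqr(2,3) by blast
      moreover have "p \<in> Y1" using Y2Y1 pqr(1) by blast
      ultimately have "p + (q + r) \<in> Y" using Y1(3) by blast
      then have "p + (q + r) \<in> Z \<inter> cyclic h" using pqr(4) by (simp add: Y_def)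
      then show "p + (q + r) = 0" using Z(2) by blast
    qed
    then show ?thesis by blast
  qed
  define nxt where "nxt n W = (SOME p. R n W (fst p) (snd p))" for n W
  have nxtR: "R n W (fst (nxt n W)) (snd (nxt n W))" if WW: "openin T W" "0 \<in> W" for n W
  proof -
    obtain x W' where "R n W x W'" using step[OF WW] by blast
    then have "R n W (fst (x, W')) (snd (x, W'))" by simp
    then show ?thesis unfolding nxt_def by (rule someI)
  qed
  define Us where "Us = useq nxt"
  define as where "as k = fst (nxt k (Us k))" for k
  have inv: "openin T (Us k) \<and> 0 \<in> Us k" for k
  proof (induction k)
    case 0
    then show ?case using openin_topspace[of T] by (simp add: Us_def ts)
  next
    case (Suc k)
    then show ?case using nxtR[of "Us k" k] by (simp add: Us_def R_def)
  qed
  have RR: "R k (Us k) (as k) (Us (Suc k))" for k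
    using nxtR[of "Us k" k] inv[of k] by (simp add: Us_def as_def)
  interpret seqS T Us as
  proof
    show "topological_ab_group T" by (rule tg)
    show "\<And>x. subtopology T (cyclic x) = discrete_topology (cyclic x)" by (rule disc)
    show "\<And>k. openin T (Us k)" "\<And>k. 0 \<in> Us k" using inv by auto
    show "\<And>k. as k \<noteq> 0" "\<And>k. cyclic (as k) \<subseteq> Us k" using RR by (auto simp: R_def)
    show "\<And>k x y. x \<in> Us (Suc k) \<Longrightarrow> y \<in> Us (Suc k) \<Longrightarrow> x + y \<in> Us k" using RR by (auto simp: R_def)
    show "\<And>k x y z. x \<in> Us (Suc k) \<Longrightarrow> y \<in> Us (Suc k) \<Longrightarrow> z \<in> Us (Suc k) \<Longrightarrow>
                x + (y + z) \<in> cyclic (as k) \<Longrightarrow> x + (y + z) = 0" using RR by (auto simp: R_def)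
    show "\<And>V. openin T V \<Longrightarrow> 0 \<in> V \<Longrightarrow> \<exists>k. Us k \<subseteq> V"
    proof -
      fix V assume "openin T V" "0 \<in> V"
      then obtain n where "B n \<subseteq> V" using Bs by blast
      moreover have "Us (Suc n) \<subseteq> B n" using RR[of n] by (simp add: R_def)
      ultimately show "\<exists>k. Us k \<subseteq> V" by blast
    qed
  qed
  show ?thesis using result by blast
qed

theorem theorem8p2:
  fixes T :: "('a::ab_group_add) topology"
  assumes "topological_ab_group T"
    and "metrizable_space T"
    and "\<And>a. subtopology T (cyclic a) = discrete_topology (cyclic a)"
  shows "(\<exists>A. infinite A \<and> contains_S T A) \<longleftrightarrow> \<not> NSS T"
  using dir1[OF assms(1)] dir2[OF assms] by blast

end
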